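(* Let $\gamma>0$, $R\ge600(\gamma^{3/4}+\gamma^{-3/4})$, and let $j\in\mathbb{N}$ with $$1\le j\le M_R:=\left\lfloor\frac1{32\pi}\frac{\gamma R^2}{\log R}\right\rfloor.$$ Let $w_j$ be the unique solution in $F_j$ of the equation $w=G_{j,R}(w)$ (which exists and is unique for such $R$). Then $-\frac\gamma2\le\operatorname{Im}w_j^2\le0$; consequently $z_j^2:=w_j^2+i\gamma\in\mathbb{C}_+$ and $z_j^2\in\sigma_d(L_{\gamma,R})$.
   Context: $L_{\gamma,R}=-\frac{d^2}{dx^2}+i\gamma\chi_{[0,R]}$ on $L^2(\mathbb{R}_+)$ with Dirichlet boundary condition at $0$; $\sigma_d$ denotes eigenvalues of finite algebraic multiplicity in $\mathbb{C}\setminus\mathbb{R}_+$. $\arg_-(\zeta)\in[-\pi,\pi)$, $\mathrm{sq}_-(\zeta)=\sqrt{|\zeta|}e^{\frac i2\arg_-(\zeta)}$. $A(w)=\log\left|\frac{\mathrm{sq}_-(w^2+i\gamma)-w}{\mathrm{sq}_-(w^2+i\gamma)+w}\right|$, $B_j(w)=\arg_-\!\left(\frac{\mathrm{sq}_-(w^2+i\gamma)-w}{\mathrm{sq}_-(w^2+i\gamma)+w}\right)+2\pi j$, $G_{j,R}(w)=\frac{-B_j(w)+iA(w)}{2R}$, $F_\infty=\{w:\operatorname{Re}w\le0\le\operatorname{Im}w,\ |\operatorname{Re}w|\ge2\operatorname{Im}w\}$, $F_j=\{w\in F_\infty:B_j(w)\ge2|A(w)|\}$. *)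

theory Defs
  imports "HOL-Analysis.Analysis"
begin

definition arg_m :: "complex \<Rightarrow> real" where
  "arg_m z = (if Arg z = pi then - pi else Arg z)"

definition sq_m :: "complex \<Rightarrow> complex" where
  "sq_m z = complex_of_real (sqrt (cmod z)) * exp (\<i> * complex_of_real (arg_m z / 2))"

definition quot_fun :: "real \<Rightarrow> complex \<Rightarrow> complex" where
  "quot_fun \<gamma> w = (sq_m (w^2 + \<i> * complex_of_real \<gamma>) - w) / (sq_m (w^2 + \<i> * complex_of_real \<gamma>) + w)"

definition A_fun :: "real \<Rightarrow> complex \<Rightarrow> real" where
  "A_fun \<gamma> w = ln (cmod (quot_fun \<gamma> w))"

definition B_fun :: "real \<Rightarrow> nat \<Rightarrow> complex \<Rightarrow> real" where
  "B_fun \<gamma> j w = arg_m (quot_fun \<gamma> w) + 2 * pi * real j"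

definition G_fun :: "real \<Rightarrow> nat \<Rightarrow> real \<Rightarrow> complex \<Rightarrow> complex" where
  "G_fun \<gamma> j R w = (complex_of_real (- B_fun \<gamma> j w) + \<i> * complex_of_real (A_fun \<gamma> w)) / complex_of_real (2 * R)"

definition F_inf :: "complex set" where
  "F_inf = {w. Re w \<le> 0 \<and> 0 \<le> Im w \<and> \<bar>Re w\<bar> \<ge> 2 * Im w}"

definition F_j :: "real \<Rightarrow> nat \<Rightarrow> complex set" where
  "F_j \<gamma> j = {w \<in> F_inf. B_fun \<gamma> j w \<ge> 2 * \<bar>A_fun \<gamma> w\<bar>}"

text \<open>Square integrability on R_+ (functions are only considered on [0,oo)).\<close>
definition L2p :: "(real \<Rightarrow> complex) \<Rightarrow> bool" where
  "L2p u \<longleftrightarrow> set_borel_measurable lborel {0..} u \<and>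
     set_integrable lborel {0..} (\<lambda>x. (cmod (u x))^2)"

text \<open>Graph of the operator L_{gamma,R} = -d^2/dx^2 + i gamma chi_[0,R] with Dirichlet condition:
  u is in the (maximal) domain H^2 \<inter> H^1_0 and L u = f (a.e.).  This is written in integrated form:
  u(0) = 0, u' = v with u(x) = int_0^x v, and v(x) = v(0) + int_0^x (i gamma chi u - f),
  i.e. u'' = i gamma chi u - f.\<close>
definition L_rel :: "real \<Rightarrow> real \<Rightarrow> (real \<Rightarrow> complex) \<Rightarrow> (real \<Rightarrow> complex) \<Rightarrow> bool" where
  "L_rel \<gamma> R u f \<longleftrightarrow> L2p u \<and> L2p f \<and> u 0 = 0 \<and>
     (\<exists>v. \<forall>x\<ge>0. set_integrable lborel {0..x} v \<and>
        set_integrable lborel {0..x}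
          (\<lambda>t. \<i> * complex_of_real (\<gamma> * indicator {0..R} t) * u t - f t) \<and>
        u x = (LINT t:{0..x}|lborel. v t) \<and>
        v x = v 0 + (LINT t:{0..x}|lborel. \<i> * complex_of_real (\<gamma> * indicator {0..R} t) * u t - f t))"

definition is_eigenvalue :: "real \<Rightarrow> real \<Rightarrow> complex \<Rightarrow> bool" where
  "is_eigenvalue \<gamma> R mu \<longleftrightarrow> (\<exists>u. (\<exists>x\<ge>0. u x \<noteq> 0) \<and> L_rel \<gamma> R u (\<lambda>x. mu * u x))"

text \<open>Root space (generalized eigenspace): u with (L - lambda)^k u = 0 for some k.\<close>
definition gen_eigenspace :: "real \<Rightarrow> real \<Rightarrow> complex \<Rightarrow> (real \<Rightarrow> complex) set" where
  "gen_eigenspace \<gamma> R mu = {u. \<exists>k us. us 0 = u \<and>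
      (\<forall>i<k. L_rel \<gamma> R (us i) (\<lambda>x. mu * us i x + us (Suc i) x)) \<and> (\<forall>x\<ge>0. us k x = 0)}"

text \<open>Finite algebraic multiplicity: the root space is finite dimensional (modulo functions
  vanishing on [0,oo), which are zero in L^2(R_+)).\<close>
definition finite_alg_mult :: "real \<Rightarrow> real \<Rightarrow> complex \<Rightarrow> bool" where
  "finite_alg_mult \<gamma> R mu \<longleftrightarrow> (\<exists>B. finite B \<and> (\<forall>u\<in>gen_eigenspace \<gamma> R mu.
      \<exists>c. \<forall>x\<ge>0. u x = (\<Sum>b\<in>B. c b * b x)))"

definition sigma_d :: "real \<Rightarrow> real \<Rightarrow> complex set" where
  "sigma_d \<gamma> R = {mu. mu \<notin> complex_of_real ` {0..} \<and> is_eigenvalue \<gamma> R mu \<and> finite_alg_mult \<gamma> R mu}"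

end

theory Submission
  imports Defs "HOL-Real_Asymp.Real_Asymp"
begin

lemma exp_i_arg_m: "exp (\<i> * complex_of_real (arg_m z)) = exp (\<i> * complex_of_real (Arg z))"
proof (cases "Arg z = pi")
  case True
  have "exp (\<i> * complex_of_real (-pi)) = exp (\<i> * complex_of_real pi)"
    by (simp add: exp_minus Complex_Transcendental.exp_Euler)
  then show ?thesis using True by (simp add: arg_m_def)
qed (simp add: arg_m_def)

lemma sq_m_sq: "(sq_m z)^2 = z"
proof (cases "z = 0")
  case True then show ?thesis by (simp add: sq_m_def)
next
  case False
  have "(sq_m z)^2 = complex_of_real (sqrt (cmod z))^2 * exp (\<i> * complex_of_real (arg_m z / 2))^2"
    by (simp add: sq_m_def power_mult_distrib)
  also have "\<dots> = complex_of_real (cmod z) * exp (\<i> * complex_of_real (arg_m z))"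
  proof -
    have "complex_of_real (sqrt (cmod z))^2 = complex_of_real (cmod z)"
      by (simp flip: of_real_power)
    moreover have "exp (\<i> * complex_of_real (arg_m z / 2))^2 = exp (\<i> * complex_of_real (arg_m z))"
      by (simp add: power2_eq_square flip: exp_add)
    ultimately show ?thesis by simp
  qed
  also have "\<dots> = z" using Arg_eq[OF False] by (simp add: exp_i_arg_m)
  finally show ?thesis .
qed

lemma norm_sq_m: "cmod (sq_m z) = sqrt (cmod z)"
  by (simp add: sq_m_def norm_mult)

lemma arg_m_bounds: "- pi \<le> arg_m z" "arg_m z < pi"
  using mpi_less_Arg[of z] Arg_le_pi[of z] by (auto simp: arg_m_def)

lemma Im_sq_m_pos: assumes "Im z > 0" shows "Im (sq_m z) > 0"
proof -
  have a: "0 < Arg z" "Arg z < pi" using Arg_lt_pi assms by auto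
  hence am: "arg_m z = Arg z" by (simp add: arg_m_def)
  have z0: "z \<noteq> 0" using assms by auto
  have "Im (sq_m z) = sqrt (cmod z) * sin (Arg z / 2)"
    by (simp add: sq_m_def am Im_exp)
  moreover have "sin (Arg z / 2) > 0" using a by (intro sin_gt_zero) auto
  ultimately show ?thesis using z0 by simp
qed

lemma ineq_core:
  fixes t R A B Wn :: real
  assumes t: "t > 0" and R: "R \<ge> 600 * (t^3 + 1/t^3)"
    and A: "0 \<le> A" and B0: "0 \<le> B" and B: "B \<le> pi + t^4 * R^2 / (16 * ln R)"
    and AW: "A \<le> 2 * ln ((2 * Wn + t^2) / t^2)" and W0: "0 \<le> Wn" and W: "Wn \<le> 3 * B / (4 * R)"
  shows "A * B \<le> t^4 * R^2"
proof -
  have t3: "t^3 + 1/t^3 \<ge> 2"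
  proof -
    have "0 \<le> (t^3 - 1)^2 / t^3" using t by simp
    also have "(t^3 - 1)^2 / t^3 = t^3 + 1/t^3 - 2" using t by (simp add: field_simps power2_eq_square)
    finally show ?thesis by simp
  qed
  have "600 * 2 \<le> 600 * (t^3 + 1/t^3)" using t3 by (intro mult_left_mono) auto
  hence R1200: "R \<ge> 1200" using R by linarith
  have Rpos: "R > 0" using R1200 by simp
  have "600 * (t^3 + 1/t^3) = 600 * t^3 + 600 / t^3" by (simp add: algebra_simps)
  moreover have "600 / t^3 > 0" "600 * t^3 > 0" using t by auto
  ultimately have Ra: "t^3 \<le> R / 600" and Rb: "1/t^3 \<le> R/600" using R by linarith+
  define L where "L = ln R"
  have L1: "L \<ge> 1"
  proof -
    have "exp 1 \<le> R" using exp_le R1200 by linarith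
    thus ?thesis unfolding L_def using Rpos by (simp add: ln_ge_iff)
  qed
  have tsq: "t^2 \<le> 1 + R/600 \<and> 1/t^2 \<le> 1 + R/600"
  proof (cases "t \<ge> 1")
    case True
    have "t^2 \<le> t^3" using True by (simp add: power_increasing)
    moreover have "t^3 \<le> R/600" using Ra .
    moreover have "1/t^2 \<le> 1" using True by simp
    ultimately show ?thesis using Rpos by linarith
  next
    case False
    have "t^2 \<le> 1" using False t by (simp add: power_le_one)
    moreover have "1/t^2 \<le> 1/t^3" using False t by (simp add: divide_simps power_decreasing)
    moreover have "1/t^3 \<le> R/600" using Rb .
    ultimately show ?thesis using Rpos by linarith
  qed
  have q1: "(2 * Wn + t^2) / t^2 \<le> R^2"
  proof -
    have "(2 * Wn + t^2) / t^2 = 1 + 2 * Wn / t^2" using t by (simp add: field_simps)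
    also have "\<dots> \<le> 1 + 3 * B / (2 * R) * (1 / t^2)"
      using W t Rpos by (simp add: field_simps)
    also have "\<dots> \<le> 1 + 3 / (2 * R) * (pi * (1/t^2) + R^2/16 * (t^2 / L))"
    proof -
      have "B * (1/t^2) \<le> (pi + t^4 * R^2 / (16 * L)) * (1/t^2)" using B t unfolding L_def
        by (intro mult_right_mono) auto
      also have "\<dots> = pi * (1/t^2) + R^2/16 * (t^2 / L)" using t L1 by (simp add: field_simps power2_eq_square power4_eq_xxxx)
      finally show ?thesis using Rpos by (simp add: field_simps)
    qed
    also have "\<dots> \<le> 1 + 3 / (2 * R) * (4 * (R/400) + R^2/16 * (R/400))"
    proof -
      have "pi * (1/t^2) \<le> 4 * (R/400)"
        using tsq pi_less_4 R1200 by (intro mult_mono) auto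
      moreover have "t^2 / L \<le> R/400"
      proof -
        have "t^2 / L \<le> t^2 / 1" using L1 t by (intro divide_left_mono) auto
        thus ?thesis using tsq R1200 by simp
      qed
      ultimately show ?thesis using Rpos by (intro add_left_mono mult_left_mono add_mono) auto
    qed
    also have "\<dots> \<le> R^2"
    proof -
      have "1200*1200 \<le> R*R" using R1200 by (intro mult_mono) auto
      thus ?thesis using R1200 by (simp add: field_simps power2_eq_square)
    qed
    finally show ?thesis .
  qed
  have AL: "A \<le> 4 * L"
  proof -
    have "(2 * Wn + t^2) / t^2 > 0" using t W0 by (intro divide_pos_pos add_nonneg_pos) auto
    hence "ln ((2 * Wn + t^2) / t^2) \<le> ln (R^2)" using q1 Rpos by (subst ln_le_cancel_iff) auto
    also have "\<dots> = 2 * L" unfolding L_def using Rpos by (simp add: ln_realpow)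
    finally show ?thesis using AW by linarith
  qed
  have cube: "(t^4 * R^2)^3 \<ge> 600^4 * R^2"
  proof (cases "t \<ge> 1")
    case True
    have "(t^4 * R^2)^3 = t^12 * R^4 * R^2" by algebra
    moreover have "t^12 \<ge> 1" using True by simp
    moreover have "R^4 \<ge> 600^4" using R1200 by (intro power_mono) auto
    ultimately have "1 * 600^4 \<le> t^12 * R^4" by (intro mult_mono) auto
    hence "600^4 * R^2 \<le> t^12 * R^4 * R^2" by (intro mult_right_mono) auto
    thus ?thesis using \<open>(t^4 * R^2)^3 = t^12 * R^4 * R^2\<close> by simp
  next
    case False
    have "t^3 * R \<ge> 600" using Rb t by (simp add: field_simps)
    hence "(t^3 * R)^4 \<ge> 600^4" by (intro power_mono) auto
    moreover have "(t^4 * R^2)^3 = (t^3 * R)^4 * R^2" by algebra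
    ultimately show ?thesis by (simp add: mult_right_mono)
  qed
  have Lsq: "L \<le> 2 * sqrt R"
  proof -
    have "ln (sqrt R) \<le> sqrt R - 1" using Rpos by (intro ln_le_minus_one) auto
    moreover have "ln (sqrt R) = L / 2" unfolding L_def using Rpos by (simp add: ln_sqrt)
    ultimately show ?thesis by simp
  qed
  have "(30 * L)^3 \<le> (t^4 * R^2)^3"
  proof -
    have "L^2 \<le> (2 * sqrt R)^2" using Lsq L1 by (intro power_mono) auto
    hence L2: "L^2 \<le> 4 * R" using Rpos by (simp add: power_mult_distrib)
    have "L^3 = L^2 * L" by (simp add: power3_eq_cube power2_eq_square)
    also have "\<dots> \<le> (4 * R) * (2 * sqrt R)" using L2 Lsq L1 Rpos by (intro mult_mono) auto
    also have "\<dots> \<le> (4 * R) * (2 * R)"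
    proof -
      have "R \<le> R * R" using R1200 by (simp add: mult_le_cancel_left1)
      hence "sqrt R \<le> R" using Rpos by (intro real_le_lsqrt) (auto simp: power2_eq_square)
      thus ?thesis using Rpos by (intro mult_left_mono) auto
    qed
    also have "\<dots> = 8 * R^2" by (simp add: power2_eq_square)
    finally have "(30 * L)^3 \<le> 27000 * 8 * R^2" by (simp add: power_mult_distrib)
    also have "\<dots> \<le> 600^4 * R^2" by simp
    finally show ?thesis using cube by linarith
  qed
  hence L30: "30 * L \<le> t^4 * R^2"
    using L1 t by (subst (asm) power_mono_iff) auto
  have "A * B \<le> 4 * L * (pi + t^4 * R^2 / (16 * L))"
    using AL B A B0 unfolding L_def by (intro mult_mono) auto
  also have "\<dots> = 4 * L * pi + t^4 * R^2 / 4" using L1 by (simp add: field_simps)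
  also have "\<dots> \<le> 16 * L + t^4 * R^2 / 4" using L1 pi_less_4 by simp
  also have "\<dots> \<le> t^4 * R^2" using L30 L1 by linarith
  finally show ?thesis .
qed

lemma part1:
  fixes \<gamma> R :: real and j :: nat and w :: complex
  assumes gpos: "\<gamma> > 0"
    and Rbig: "R \<ge> 600 * (\<gamma> powr (3/4) + \<gamma> powr (-3/4))"
    and j1: "1 \<le> j"
    and jM: "int j \<le> \<lfloor>(1 / (32 * pi)) * (\<gamma> * R^2 / ln R)\<rfloor>"
    and wF: "w \<in> F_j \<gamma> j"
    and fixw: "w = G_fun \<gamma> j R w"
  shows "- \<gamma> / 2 \<le> Im (w^2) \<and> Im (w^2) \<le> 0 \<and> w \<noteq> 0 \<and> R > 0 \<and>
         w * cos (w * complex_of_real R) = \<i> * sq_m (w^2 + \<i> * complex_of_real \<gamma>) * sin (w * complex_of_real R)"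
proof -
  define t where "t = \<gamma> powr (1/4)"
  have t0: "t > 0" using gpos by (simp add: t_def)
  have pw: "t^n = \<gamma> powr (real n / 4)" for n :: nat
  proof -
    have "t^n = t powr (real n)" using powr_realpow[OF t0, of n] by simp
    also have "\<dots> = \<gamma> powr (real n / 4)" unfolding t_def powr_powr by simp
    finally show ?thesis .
  qed
  have t3: "\<gamma> powr (3/4) = t^3" using pw[of 3] by simp
  have t3m: "\<gamma> powr (-3/4) = 1 / t^3"
  proof -
    have "(-3/4::real) = - (3/4)" by simp
    hence "\<gamma> powr (-3/4) = inverse (\<gamma> powr (3/4))" by (simp only: powr_minus)
    thus ?thesis using t3 by (metis inverse_eq_divide)
  qed
  have t4: "\<gamma> = t^4" using pw[of 4] gpos by simp
  have t2: "sqrt \<gamma> = t^2" using t0 t4 by (simp add: real_sqrt_unique power_mult[symmetric])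
  have R600: "R \<ge> 600 * (t^3 + 1/t^3)" using Rbig unfolding t3 t3m .
  have "0 < 600 * (t^3 + 1/t^3)" using t0 by (intro mult_pos_pos add_pos_pos) auto
  hence Rpos: "R > 0" using R600 by linarith
  define z where "z = sq_m (w^2 + \<i> * complex_of_real \<gamma>)"
  define qq where "qq = quot_fun \<gamma> w"
  have qq_def': "qq = (z - w) / (z + w)" by (simp add: qq_def quot_fun_def z_def)
  define A where "A = A_fun \<gamma> w"
  define B where "B = B_fun \<gamma> j w"
  have A_def': "A = ln (cmod qq)" by (simp add: A_def A_fun_def qq_def)
  have B_def': "B = arg_m qq + 2 * pi * real j" by (simp add: B_def B_fun_def qq_def)
  have zsq: "z^2 = w^2 + \<i> * complex_of_real \<gamma>" by (simp add: z_def sq_m_sq)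
  have zw: "(z - w) * (z + w) = \<i> * complex_of_real \<gamma>"
    using zsq by (simp add: algebra_simps power2_eq_square)
  have zmw: "z - w \<noteq> 0" "z + w \<noteq> 0" using zw gpos by auto
  have qq0: "qq \<noteq> 0" using zmw by (simp add: qq_def')
  have w2R: "w * complex_of_real (2 * R) = complex_of_real (- B) + \<i> * complex_of_real A"
    using fixw Rpos by (simp add: G_fun_def A_def B_def field_simps)
  have ReW: "Re w = - B / (2 * R)" and ImW: "Im w = A / (2 * R)"
  proof -
    have "Re (w * complex_of_real (2 * R)) = - B" "Im (w * complex_of_real (2 * R)) = A"
      using w2R by simp_all
    thus "Re w = - B / (2 * R)" "Im w = A / (2 * R)" using Rpos by (simp_all add: field_simps)
  qed
  have F: "Re w \<le> 0" "0 \<le> Im w" "\<bar>Re w\<bar> \<ge> 2 * Im w" "B \<ge> 2 * \<bar>A\<bar>"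
    using wF by (auto simp: F_j_def F_inf_def A_def B_def)
  have A0: "A \<ge> 0" using F(2) ImW Rpos by (simp add: divide_nonneg_pos zero_le_divide_iff)
  have B0: "B \<ge> 0" using F(4) by linarith
  have normw: "cmod w \<le> 3 * B / (4 * R)"
  proof -
    have "cmod w \<le> \<bar>Re w\<bar> + \<bar>Im w\<bar>" by (rule cmod_le)
    also have "\<dots> \<le> 3/2 * \<bar>Re w\<bar>" using F by simp
    also have "\<dots> = 3 * B / (4 * R)" using F(1) ReW B0 Rpos by (simp add: abs_of_nonpos)
    finally show ?thesis .
  qed
  have "cmod ((z - w) * (z + w)) = \<gamma>" using zw gpos by (simp add: norm_mult)
  hence "cmod (z - w) * cmod (z + w) = \<gamma>" by (simp only: norm_mult)
  hence qqn: "cmod qq = cmod (z - w)^2 / \<gamma>" using zmw gpos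
    by (simp add: qq_def' norm_divide field_simps power2_eq_square)
  have zn: "cmod z \<le> cmod w + t^2"
  proof -
    have "cmod z = sqrt (cmod (w^2 + \<i> * complex_of_real \<gamma>))" by (simp add: z_def norm_sq_m)
    also have "\<dots> \<le> sqrt (cmod w ^ 2 + \<gamma>)"
    proof -
      have "cmod (w^2 + \<i> * complex_of_real \<gamma>) \<le> cmod (w^2) + cmod (\<i> * complex_of_real \<gamma>)" by (rule norm_triangle_ineq)
      thus ?thesis using gpos by (simp add: norm_power norm_mult)
    qed
    also have "\<dots> \<le> cmod w + t^2"
    proof (rule real_le_lsqrt)
      have e: "(cmod w + t^2)^2 = cmod w^2 + 2*(cmod w * t^2) + t^4" by algebra
      have "0 \<le> cmod w * t^2" by simp
      thus "cmod w ^ 2 + \<gamma> \<le> (cmod w + t^2)^2" using e t4 by linarith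
    qed (use t0 in auto)
    finally show ?thesis .
  qed
  have zwn: "cmod (z - w) \<le> 2 * cmod w + t^2"
    using norm_triangle_ineq4[of z w] zn by linarith
  have AW: "A \<le> 2 * ln ((2 * cmod w + t^2) / t^2)"
  proof -
    have "cmod qq \<le> (2 * cmod w + t^2)^2 / t^4" unfolding qqn t4[symmetric]
      using zwn gpos by (intro divide_right_mono power_mono) auto
    also have "\<dots> = ((2 * cmod w + t^2) / t^2)^2" by (simp add: power_divide power_mult[symmetric])
    finally have "ln (cmod qq) \<le> ln (((2 * cmod w + t^2) / t^2)^2)"
      using qq0 t0 by (subst ln_le_cancel_iff) auto
    also have "\<dots> = 2 * ln ((2 * cmod w + t^2) / t^2)"
      using t0 by (subst ln_realpow) (auto intro!: divide_pos_pos add_nonneg_pos)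
    finally show ?thesis by (simp add: A_def')
  qed
  have lnR: "ln R > 0"
  proof (rule ccontr)
    assume "\<not> ln R > 0"
    hence "(1 / (32 * pi)) * (\<gamma> * R^2 / ln R) \<le> 0"
      using gpos Rpos by (intro mult_nonneg_nonpos divide_nonneg_nonpos) auto
    hence "\<lfloor>(1 / (32 * pi)) * (\<gamma> * R^2 / ln R)\<rfloor> \<le> 0" by linarith
    thus False using jM j1 by linarith
  qed
  have jle: "real j \<le> (1 / (32 * pi)) * (\<gamma> * R^2 / ln R)" using jM by linarith
  have Ble: "B \<le> pi + t^4 * R^2 / (16 * ln R)"
  proof -
    have "2 * pi * real j \<le> 2 * pi * ((1 / (32 * pi)) * (\<gamma> * R^2 / ln R))"
      using jle by (intro mult_left_mono) auto
    also have "\<dots> = t^4 * R^2 / (16 * ln R)" using t4 by (simp add: field_simps)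
    finally show ?thesis using B_def' arg_m_bounds(2)[of qq] by linarith
  qed
  have AB: "A * B \<le> t^4 * R^2"
    by (rule ineq_core[OF t0 R600 A0 B0 Ble AW norm_ge_zero normw])
  have ImW2: "Im (w^2) = - (A * B) / (2 * R^2)"
  proof -
    have "Im (w^2) = 2 * Re w * Im w" by (simp add: power2_eq_square)
    also have "\<dots> = - (A * B) / (2 * R^2)" unfolding ReW ImW using Rpos by (simp add: field_simps power2_eq_square)
    finally show ?thesis .
  qed
  have c1: "- \<gamma> / 2 \<le> Im (w^2)"
  proof -
    have "(A * B) / (2 * R^2) \<le> t^4 * R^2 / (2 * R^2)" using AB Rpos by (intro divide_right_mono) auto
    also have "\<dots> = \<gamma> / 2" using Rpos t4 by simp
    finally show ?thesis using ImW2 by simp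
  qed
  have c2: "Im (w^2) \<le> 0" using ImW2 A0 B0 Rpos by simp
  have w0: "w \<noteq> 0"
  proof
    assume "w = 0"
    hence "B = 0" using ReW Rpos by simp
    hence "arg_m qq = - 2 * pi * real j" using B_def' by simp
    moreover have "- 2 * pi * real j \<le> - 2 * pi" using j1 by simp
    ultimately show False using arg_m_bounds(1)[of qq] pi_gt_zero by linarith
  qed
  have expq: "exp (\<i> * w * complex_of_real (2 * R)) * qq = 1"
  proof -
    have e1: "\<i> * w * complex_of_real (2 * R) = - complex_of_real A - \<i> * complex_of_real (arg_m qq) - complex_of_real (2 * real j * pi) * \<i>"
    proof -
      have "\<i> * w * complex_of_real (2 * R) = \<i> * (complex_of_real (- B) + \<i> * complex_of_real A)"
        using w2R by (simp add: mult.assoc)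
      also have "\<dots> = - complex_of_real A - \<i> * complex_of_real B"
        by (simp add: algebra_simps)
      finally show ?thesis using B_def' by (simp add: algebra_simps)
    qed
    have qpol: "qq = complex_of_real (cmod qq) * exp (\<i> * complex_of_real (arg_m qq))"
      using Arg_eq[OF qq0] by (simp add: exp_i_arg_m)
    have eA: "exp (- complex_of_real A) = 1 / complex_of_real (cmod qq)"
      using qq0 by (simp add: A_def' exp_minus exp_of_real inverse_eq_divide)
    have ej: "exp (complex_of_real (2 * real j * pi) * \<i>) = 1"
      using exp_integer_2pi[of "real j"] by (simp add: mult.assoc)
    have "exp (\<i> * w * complex_of_real (2 * R)) =
        exp (- complex_of_real A) * exp (- (\<i> * complex_of_real (arg_m qq))) / exp (complex_of_real (2 * real j * pi) * \<i>)"
      unfolding e1 by (simp add: exp_diff exp_minus divide_inverse)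
    also have "\<dots> = 1 / complex_of_real (cmod qq) * exp (- (\<i> * complex_of_real (arg_m qq)))"
      using eA ej by simp
    finally have h: "exp (\<i> * w * complex_of_real (2 * R)) = 1 / complex_of_real (cmod qq) * exp (- (\<i> * complex_of_real (arg_m qq)))" .
    have "exp (\<i> * w * complex_of_real (2 * R)) * qq = exp (\<i> * w * complex_of_real (2 * R)) * (complex_of_real (cmod qq) * exp (\<i> * complex_of_real (arg_m qq)))"
      by (simp only: qpol[symmetric])
    also have "\<dots> = 1" unfolding h using qq0 by (simp add: exp_minus field_simps)
    finally show ?thesis .
  qed
  have match: "w * cos (w * complex_of_real R) = \<i> * z * sin (w * complex_of_real R)"
  proof -
    define E where "E = exp (\<i> * (w * complex_of_real R))"
    have E0: "E \<noteq> 0" by (simp add: E_def)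
    have E2: "E^2 = exp (\<i> * w * complex_of_real (2 * R))"
    proof -
      have "E^2 = exp (\<i> * (w * complex_of_real R) + \<i> * (w * complex_of_real R))"
        by (simp add: E_def power2_eq_square flip: exp_add)
      also have "\<i> * (w * complex_of_real R) + \<i> * (w * complex_of_real R) = \<i> * w * complex_of_real (2 * R)"
        by (simp add: algebra_simps)
      finally show ?thesis .
    qed
    have EE: "E^2 * (z - w) = z + w"
    proof -
      have "E^2 * (z - w) = E^2 * qq * (z + w)" using zmw(2) by (simp add: qq_def')
      also have "\<dots> = z + w" using expq E2 by simp
      finally show ?thesis .
    qed
    have d: "z * (E^2 - 1) - w * (E^2 + 1) = E^2 * (z - w) - (z + w)" by (simp add: algebra_simps)
    have "z * (E^2 - 1) - w * (E^2 + 1) = 0" using d unfolding EE by simp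
    hence k: "w * (E^2 + 1) = z * (E^2 - 1)" by (metis right_minus_eq)
    have c: "cos (w * complex_of_real R) = (E + inverse E) / 2"
      unfolding E_def using cos_exp_eq[of "w * complex_of_real R"] by (simp only: exp_minus)
    have sn: "sin (w * complex_of_real R) = (E - inverse E) / (2 * \<i>)"
      unfolding E_def using sin_exp_eq[of "w * complex_of_real R"] by (simp only: exp_minus)
    have "w * cos (w * complex_of_real R) = w * (E + 1/E) / 2"
      unfolding c by (simp add: inverse_eq_divide)
    also have "\<dots> = w * (E^2 + 1) / E / 2" using E0 by (simp add: field_simps power2_eq_square)
    also have "\<dots> = z * (E^2 - 1) / E / 2" using k by simp
    also have "\<dots> = z * (E - 1/E) / 2" using E0 by (simp add: field_simps power2_eq_square)
    also have "\<dots> = \<i> * z * sin (w * complex_of_real R)"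
    proof -
      have "\<i> * a * (b / (2 * \<i>)) = a * (b::complex) / 2" for a b by (simp add: field_simps)
      thus ?thesis unfolding sn by (simp add: inverse_eq_divide)
    qed
    finally show ?thesis .
  qed
  show ?thesis using c1 c2 w0 Rpos match by (simp add: z_def)
qed

locale eig =
  fixes \<gamma> R :: real and w z :: complex
  assumes gpos: "\<gamma> > 0" and Rpos: "R > 0" and w0: "w \<noteq> 0"
    and zsq: "z^2 = w^2 + \<i> * complex_of_real \<gamma>" and Imz: "Im z > 0"
    and match: "w * cos (w * complex_of_real R) = \<i> * z * sin (w * complex_of_real R)"
begin

definition "mu = w^2 + \<i> * complex_of_real \<gamma>"
definition "sR = sin (w * complex_of_real R)"
definition "pf x = (if x \<le> R then sin (w * complex_of_real x) else sR * exp (\<i> * z * complex_of_real (x - R)))"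
definition "qf x = (if x \<le> R then w * cos (w * complex_of_real x) else \<i> * z * sR * exp (\<i> * z * complex_of_real (x - R)))"
definition "kf x = \<i> * complex_of_real (\<gamma> * indicator {0..R} x) - mu"

lemma zsq': "z^2 = mu" by (simp add: zsq mu_def)

lemma cont_pf: "continuous_on UNIV pf"
  unfolding pf_def
  by (rule continuous_on_cases_le) (auto intro!: continuous_intros simp: sR_def)

lemma cont_qf: "continuous_on UNIV qf"
  unfolding qf_def
  by (rule continuous_on_cases_le) (auto intro!: continuous_intros simp: sR_def match)

lemma deriv_sin: "((\<lambda>t. sin (w * complex_of_real t)) has_vector_derivative w * cos (w * complex_of_real x)) (at x)"
proof -
  have "((\<lambda>u. sin (w * u)) has_field_derivative cos (w * complex_of_real x) * w) (at (complex_of_real x))"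
    by (auto intro!: derivative_eq_intros)
  from has_vector_derivative_real_field[OF this] show ?thesis by (simp add: mult.commute)
qed

lemma deriv_cos: "((\<lambda>t. w * cos (w * complex_of_real t)) has_vector_derivative (-(w^2) * sin (w * complex_of_real x))) (at x)"
proof -
  have "((\<lambda>u. w * cos (w * u)) has_field_derivative (-(w^2) * sin (w * complex_of_real x))) (at (complex_of_real x))"
    by (auto intro!: derivative_eq_intros simp: power2_eq_square)
  from has_vector_derivative_real_field[OF this] show ?thesis by simp
qed

lemma deriv_exp: "((\<lambda>t. c * exp (\<i> * z * complex_of_real (t - R))) has_vector_derivative \<i> * z * (c * exp (\<i> * z * complex_of_real (x - R)))) (at x)"
proof -
  have "((\<lambda>u. c * exp (\<i> * z * (u - complex_of_real R))) has_field_derivative \<i> * z * (c * exp (\<i> * z * (complex_of_real x - complex_of_real R)))) (at (complex_of_real x))"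
    by (auto intro!: derivative_eq_intros simp: algebra_simps)
  from has_vector_derivative_real_field[OF this] show ?thesis by simp
qed

lemma deriv_pf: assumes "x \<noteq> R" shows "(pf has_vector_derivative qf x) (at x)"
proof (cases "x < R")
  case True
  have q: "qf x = w * cos (w * complex_of_real x)" using True by (simp add: qf_def)
  have "(pf has_vector_derivative w * cos (w * complex_of_real x)) (at x)"
    by (rule has_vector_derivative_transform_within_open[OF deriv_sin, of "{..<R}"])
       (use True in \<open>auto simp: pf_def\<close>)
  thus ?thesis using q by simp
next
  case False
  hence x: "x > R" using assms by simp
  have q: "qf x = \<i> * z * (sR * exp (\<i> * z * complex_of_real (x - R)))" using x by (simp add: qf_def)
  have "(pf has_vector_derivative \<i> * z * (sR * exp (\<i> * z * complex_of_real (x - R)))) (at x)"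
    by (rule has_vector_derivative_transform_within_open[OF deriv_exp, of "{R<..}"])
       (use x in \<open>auto simp: pf_def\<close>)
  thus ?thesis using q by simp
qed

lemma deriv_qf: assumes "x \<noteq> R" "x > 0" shows "(qf has_vector_derivative kf x * pf x) (at x)"
proof (cases "x < R")
  case True
  have k: "kf x * pf x = -(w^2) * sin (w * complex_of_real x)"
    using True assms by (simp add: kf_def pf_def mu_def)
  have "(qf has_vector_derivative -(w^2) * sin (w * complex_of_real x)) (at x)"
    by (rule has_vector_derivative_transform_within_open[OF deriv_cos, of "{..<R}"])
       (use True in \<open>auto simp: qf_def\<close>)
  thus ?thesis using k by simp
next
  case False
  hence x: "x > R" using assms by simp
  have k: "kf x * pf x = \<i> * z * (\<i> * z * sR * exp (\<i> * z * complex_of_real (x - R)))"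
    using x zsq' by (simp add: kf_def pf_def power2_eq_square algebra_simps)
  have "(qf has_vector_derivative \<i> * z * (\<i> * z * sR * exp (\<i> * z * complex_of_real (x - R)))) (at x)"
    by (rule has_vector_derivative_transform_within_open[OF deriv_exp, of "{R<..}"])
       (use x in \<open>auto simp: qf_def\<close>)
  thus ?thesis using k by simp
qed

lemma pf0: "pf 0 = 0" using Rpos by (simp add: pf_def)

lemma pf_int: assumes "x \<ge> 0" shows "(qf has_integral pf x) {0..x}"
proof -
  have "(qf has_integral pf x - pf 0) {0..x}"
    by (rule fundamental_theorem_of_calculus_interior_strong[of "{R}"])
       (use assms in \<open>auto intro: deriv_pf continuous_on_subset[OF cont_pf]\<close>)
  thus ?thesis by (simp add: pf0)
qed

lemma qf_int: assumes "x \<ge> 0" shows "((\<lambda>t. kf t * pf t) has_integral qf x - qf 0) {0..x}"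
  by (rule fundamental_theorem_of_calculus_interior_strong[of "{R}"])
     (use assms in \<open>auto intro: deriv_qf continuous_on_subset[OF cont_qf]\<close>)

end

lemma meas_cont: "continuous_on UNIV (u :: real \<Rightarrow> 'a::{real_normed_vector, second_countable_topology}) \<Longrightarrow> u \<in> borel_measurable lborel"
  using borel_measurable_continuous_onI by simp

lemma abs_int_lborel:
  fixes f :: "real \<Rightarrow> 'a::euclidean_space"
  assumes "f absolutely_integrable_on A" "set_borel_measurable lborel A f"
  shows "set_integrable lborel A f"
  using assms integrable_completion[of "\<lambda>x. indicator A x *\<^sub>R f x" lborel]
  unfolding absolutely_integrable_on_def set_integrable_def set_borel_measurable_def by simp

lemma exp_decay_int: assumes "a > 0" shows "set_integrable lborel {c..} (\<lambda>x::real. exp (-a*x))"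
proof (rule abs_int_lborel)
  show "(\<lambda>x::real. exp (-a*x)) absolutely_integrable_on {c..}"
    by (rule nonnegative_absolutely_integrable_1[OF integrable_on_exp_minus_to_infinity[OF assms]]) auto
  show "set_borel_measurable lborel {c..} (\<lambda>x::real. exp (-a*x))"
    unfolding set_borel_measurable_def by measurable
qed

lemma L2p_of_bound:
  fixes u :: "real \<Rightarrow> complex"
  assumes cu: "continuous_on UNIV u" and b: "\<And>x. x \<ge> c \<Longrightarrow> cmod (u x) \<le> C * exp (-a*x)"
    and a: "a > 0" and c: "c \<ge> 0"
  shows "L2p u"
proof -
  have mu: "u \<in> borel_measurable lborel" using meas_cont[OF cu] .
  have m1: "set_borel_measurable lborel {0..} u" unfolding set_borel_measurable_def using mu by measurable
  have i1: "set_integrable lborel {0..c} (\<lambda>x. (cmod (u x))^2)"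
    by (rule borel_integrable_atLeastAtMost') (auto intro!: continuous_intros continuous_on_subset[OF cu])
  have i2: "set_integrable lborel {c..} (\<lambda>x. (cmod (u x))^2)"
  proof (rule set_integrable_bound[of _ _ "\<lambda>x. C^2 * exp (-(2*a)*x)"])
    show "set_integrable lborel {c..} (\<lambda>x. C^2 * exp (-(2*a)*x))"
      using exp_decay_int[of "2*a" c] a by (intro set_integrable_mult_right) auto
    show "set_borel_measurable lborel {c..} (\<lambda>x. (cmod (u x))^2)"
      unfolding set_borel_measurable_def using mu by measurable
    show "AE x in lborel. x \<in> {c..} \<longrightarrow> norm ((cmod (u x))^2) \<le> norm (C^2 * exp (-(2*a)*x))"
    proof (intro AE_I2 impI)
      fix x :: real assume "x \<in> {c..}"
      hence "cmod (u x) \<le> C * exp (-a*x)" using b by auto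
      hence "(cmod (u x))^2 \<le> (C * exp (-a*x))^2" by (intro power_mono) auto
      also have "\<dots> = C^2 * exp (-(2*a)*x)"
        by (simp add: power_mult_distrib power2_eq_square flip: exp_add)
      finally show "norm ((cmod (u x))^2) \<le> norm (C^2 * exp (-(2*a)*x))" by simp
    qed
  qed
  have "set_integrable lborel ({0..c} \<union> {c..}) (\<lambda>x. (cmod (u x))^2)"
    by (rule set_integrable_Un[OF i1 i2]) auto
  moreover have "{0..c} \<union> {c..} = {0::real..}" using c by auto
  ultimately show ?thesis using m1 by (simp add: L2p_def)
qed

lemma int_h:
  fixes u g :: "real \<Rightarrow> complex"
  assumes cu: "continuous_on UNIV u" and cg: "continuous_on UNIV g" and gpos: "\<gamma> \<ge> 0"
  shows "set_integrable lborel {a..b} (\<lambda>t. \<i> * complex_of_real (\<gamma> * indicator {0..R} t) * u t - g t)"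
proof (rule set_integral_diff(1))
  show "set_integrable lborel {a..b} g"
    by (rule borel_integrable_atLeastAtMost') (rule continuous_on_subset[OF cg], auto)
  have mu: "u \<in> borel_measurable lborel" using meas_cont[OF cu] .
  show "set_integrable lborel {a..b} (\<lambda>t. \<i> * complex_of_real (\<gamma> * indicator {0..R} t) * u t)"
  proof (rule set_integrable_bound[of _ _ "\<lambda>t. \<gamma> * cmod (u t)"])
    show "set_integrable lborel {a..b} (\<lambda>t. \<gamma> * cmod (u t))"
      by (rule borel_integrable_atLeastAtMost') (auto intro!: continuous_intros continuous_on_subset[OF cu])
    show "set_borel_measurable lborel {a..b} (\<lambda>t. \<i> * complex_of_real (\<gamma> * indicator {0..R} t) * u t)"
      unfolding set_borel_measurable_def using mu by measurable
    show "AE x in lborel. x \<in> {a..b} \<longrightarrow> norm (\<i> * complex_of_real (\<gamma> * indicator {0..R} x) * u x) \<le> norm (\<gamma> * cmod (u x))"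
      using gpos by (intro AE_I2) (auto simp: norm_mult indicator_def)
  qed
qed

context eig begin

lemma cmod_exp_iz: "cmod (exp (\<i> * z * complex_of_real t)) = exp (- Im z * t)"
  by (simp add: norm_exp_eq_Re)

lemma pf_bound: assumes "x \<ge> R" shows "cmod (pf x) \<le> (cmod sR * exp (Im z * R)) * exp (- Im z * x)"
proof (cases "x = R")
  case True
  have "exp (Im z * R) * exp (- Im z * R) = 1" by (simp flip: exp_add)
  thus ?thesis using True by (simp add: pf_def sR_def mult.assoc)
next
  case False
  hence x: "x > R" using assms by simp
  have "cmod (pf x) = cmod sR * exp (- Im z * (x - R))"
    using x by (simp add: pf_def norm_mult cmod_exp_iz)
  also have "\<dots> = (cmod sR * exp (Im z * R)) * exp (- Im z * x)"
    by (simp add: algebra_simps flip: exp_add)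
  finally show ?thesis by simp
qed

lemma L2p_pf: "L2p pf"
  by (rule L2p_of_bound[OF cont_pf pf_bound Imz]) (use Rpos in auto)

lemma L2p_mupf: "L2p (\<lambda>x. c * pf x)"
proof (rule L2p_of_bound[of _ R "cmod c * (cmod sR * exp (Im z * R))" "Im z"])
  show "continuous_on UNIV (\<lambda>x. c * pf x)" by (intro continuous_intros cont_pf)
  show "cmod (c * pf x) \<le> cmod c * (cmod sR * exp (Im z * R)) * exp (- Im z * x)" if "R \<le> x" for x
    using pf_bound[OF that] by (simp add: norm_mult mult.assoc mult_left_mono)
qed (use Rpos Imz in auto)

lemma h_eq: "(\<lambda>t. \<i> * complex_of_real (\<gamma> * indicator {0..R} t) * pf t - mu * pf t) = (\<lambda>t. kf t * pf t)"
  by (simp add: fun_eq_iff kf_def algebra_simps)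

lemma L_rel_pf: "L_rel \<gamma> R pf (\<lambda>x. mu * pf x)"
  unfolding L_rel_def
proof (intro conjI exI[of _ qf] allI impI)
  show "L2p pf" by (rule L2p_pf)
  show "L2p (\<lambda>x. mu * pf x)" by (rule L2p_mupf)
  show "pf 0 = 0" by (rule pf0)
  fix x :: real assume x: "0 \<le> x"
  show iq: "set_integrable lborel {0..x} qf"
    by (rule borel_integrable_atLeastAtMost') (rule continuous_on_subset[OF cont_qf], auto)
  show ih: "set_integrable lborel {0..x} (\<lambda>t. \<i> * complex_of_real (\<gamma> * indicator {0..R} t) * pf t - mu * pf t)"
    by (rule int_h) (use gpos in \<open>auto intro!: continuous_intros cont_pf\<close>)
  show "pf x = (LINT t:{0..x}|lborel. qf t)"
    using set_borel_integral_eq_integral(2)[OF iq] integral_unique[OF pf_int[OF x]] by simp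
  show "qf x = qf 0 + (LINT t:{0..x}|lborel. \<i> * complex_of_real (\<gamma> * indicator {0..R} t) * pf t - mu * pf t)"
    using set_borel_integral_eq_integral(2)[OF ih] integral_unique[OF qf_int[OF x]] unfolding h_eq by simp
qed

end

lemma gronwall0:
  fixes N :: "real \<Rightarrow> real"
  assumes ab: "a \<le> b" and cN: "continuous_on {a..b} N" and N0: "\<And>x. x \<in> {a..b} \<Longrightarrow> 0 \<le> N x"
    and C: "C > 0"
    and le: "\<And>x. x \<in> {a..b} \<Longrightarrow> N x \<le> C * integral {a..x} N"
  shows "\<And>x. x \<in> {a..b} \<Longrightarrow> N x = 0"
proof -
  define M where "M = (\<lambda>x. N x * exp (-(2*C)*(x - a)))"
  have cM: "continuous_on {a..b} M" unfolding M_def by (intro continuous_intros cN)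
  obtain x0 where x0: "x0 \<in> {a..b}" and mx: "\<And>y. y \<in> {a..b} \<Longrightarrow> M y \<le> M x0"
    using continuous_attains_sup[OF compact_Icc _ cM] ab by auto
  define m where "m = M x0"
  have m0: "m \<ge> 0" unfolding m_def M_def using N0[OF x0] by simp
  have Nle: "N t \<le> m * exp ((2*C)*(t - a))" if "t \<in> {a..b}" for t
  proof -
    have "N t = M t * exp ((2*C)*(t - a))" unfolding M_def by (simp add: mult.assoc flip: exp_add)
    also have "\<dots> \<le> m * exp ((2*C)*(t - a))" using mx[OF that] unfolding m_def by (intro mult_right_mono) auto
    finally show ?thesis .
  qed
  have Mle: "M x \<le> m / 2" if x: "x \<in> {a..b}" for x
  proof -
    have sub: "{a..x} \<subseteq> {a..b}" using x by auto
    have F: "((\<lambda>t. m * exp ((2*C)*(t - a))) has_integral (m * exp ((2*C)*(x - a)) / (2*C) - m * exp ((2*C)*(a - a)) / (2*C))) {a..x}"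
    proof (rule fundamental_theorem_of_calculus)
      show "a \<le> x" using x by auto
      fix t assume "t \<in> {a..x}"
      have "((\<lambda>t. m * exp ((2*C)*(t - a)) / (2*C)) has_real_derivative m * exp ((2*C)*(t - a))) (at t within {a..x})"
        using C by (auto intro!: derivative_eq_intros)
      thus "((\<lambda>t. m * exp ((2*C)*(t - a)) / (2*C)) has_vector_derivative m * exp ((2*C)*(t - a))) (at t within {a..x})"
        by (simp add: has_real_derivative_iff_has_vector_derivative)
    qed
    have "integral {a..x} N \<le> integral {a..x} (\<lambda>t. m * exp ((2*C)*(t - a)))"
      by (rule integral_le[OF integrable_continuous_interval[OF continuous_on_subset[OF cN sub]] has_integral_integrable[OF F]])
         (use Nle sub in auto)
    also have "\<dots> = m * exp ((2*C)*(x - a)) / (2*C) - m / (2*C)" using integral_unique[OF F] by simp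
    also have "\<dots> \<le> m * exp ((2*C)*(x - a)) / (2*C)" using m0 C by simp
    finally have "C * integral {a..x} N \<le> C * (m * exp ((2*C)*(x - a)) / (2*C))" using C by (intro mult_left_mono) auto
    also have "\<dots> = m / 2 * exp ((2*C)*(x - a))" using C by simp
    finally have "N x \<le> m / 2 * exp ((2*C)*(x - a))" using le[OF x] by linarith
    hence "N x * exp (-(2*C)*(x - a)) \<le> m / 2 * exp ((2*C)*(x - a)) * exp (-(2*C)*(x - a))"
      by (intro mult_right_mono) auto
    also have "\<dots> = m / 2" by (simp add: mult.assoc flip: exp_add)
    finally show ?thesis unfolding M_def .
  qed
  have "m \<le> m / 2" using Mle[OF x0] unfolding m_def .
  hence m00: "m = 0" using m0 by simp
  fix x assume x: "x \<in> {a..b}"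
  have "M x \<le> 0" using Mle[OF x] m00 by simp
  hence "N x \<le> 0" unfolding M_def by (simp add: mult_le_0_iff)
  thus "N x = 0" using N0[OF x] by simp
qed

lemma ode_uniq:
  fixes y y' k :: "real \<Rightarrow> complex"
  assumes ab: "a \<le> b" and cy: "continuous_on {a..b} y" and cy': "continuous_on {a..b} y'"
    and iy: "\<And>x. x \<in> {a..b} \<Longrightarrow> (y' has_integral y x) {a..x}"
    and iy': "\<And>x. x \<in> {a..b} \<Longrightarrow> ((\<lambda>t. k t * y t) has_integral y' x) {a..x}"
    and kb: "\<And>t. t \<in> {a..b} \<Longrightarrow> norm (k t) \<le> K"
  shows "\<And>x. x \<in> {a..b} \<Longrightarrow> y x = 0"
proof -
  define N where "N = (\<lambda>x. norm (y x) + norm (y' x))"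
  have K0: "K \<ge> 0" using kb[of a] ab by (meson atLeastAtMost_iff norm_ge_zero order.trans order_refl)
  define C where "C = 1 + K"
  have C: "C > 0" using K0 by (simp add: C_def)
  have cN: "continuous_on {a..b} N" unfolding N_def by (intro continuous_intros cy cy')
  have "N x = 0" if x: "x \<in> {a..b}" for x
  proof (rule gronwall0[OF ab cN _ C _ x])
    show "0 \<le> N t" for t by (simp add: N_def)
    fix x assume x: "x \<in> {a..b}"
    have sub: "{a..x} \<subseteq> {a..b}" using x by auto
    have c1: "continuous_on {a..x} (\<lambda>t. norm (y' t))" by (intro continuous_intros continuous_on_subset[OF cy' sub])
    have c2: "continuous_on {a..x} (\<lambda>t. K * norm (y t))" by (intro continuous_intros continuous_on_subset[OF cy sub])
    have c3: "continuous_on {a..x} N" by (rule continuous_on_subset[OF cN sub])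
    have "norm (y x) \<le> integral {a..x} (\<lambda>t. norm (y' t))"
      using integral_unique[OF iy[OF x]] integral_norm_bound_integral[of y' "{a..x}" "\<lambda>t. norm (y' t)"]
        iy[OF x] integrable_continuous_interval[OF c1] by (auto simp: has_integral_iff)
    moreover have "norm (y' x) \<le> integral {a..x} (\<lambda>t. K * norm (y t))"
    proof -
      have "norm (integral {a..x} (\<lambda>t. k t * y t)) \<le> integral {a..x} (\<lambda>t. K * norm (y t))"
      proof (rule integral_norm_bound_integral)
        show "(\<lambda>t. k t * y t) integrable_on {a..x}" using iy'[OF x] by blast
        show "(\<lambda>t. K * norm (y t)) integrable_on {a..x}" by (rule integrable_continuous_interval[OF c2])
        fix t assume "t \<in> {a..x}"
        hence "norm (k t) \<le> K" using kb sub by auto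
        thus "norm (k t * y t) \<le> K * norm (y t)" by (simp add: norm_mult mult_right_mono)
      qed
      thus ?thesis using integral_unique[OF iy'[OF x]] by simp
    qed
    ultimately have "N x \<le> integral {a..x} (\<lambda>t. norm (y' t)) + integral {a..x} (\<lambda>t. K * norm (y t))"
      unfolding N_def by linarith
    also have "\<dots> = integral {a..x} (\<lambda>t. norm (y' t) + K * norm (y t))"
      by (rule integral_add[symmetric]) (auto intro!: integrable_continuous_interval c1 c2)
    also have "\<dots> \<le> integral {a..x} (\<lambda>t. C * N t)"
    proof (rule integral_le)
      show "(\<lambda>t. norm (y' t) + K * norm (y t)) integrable_on {a..x}"
        by (intro integrable_continuous_interval continuous_on_add c1 c2)
      show "(\<lambda>t. C * N t) integrable_on {a..x}"
        by (intro integrable_continuous_interval continuous_on_mult continuous_on_const c3)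
      fix t
      have "0 \<le> K * norm (y' t)" using K0 by simp
      thus "norm (y' t) + K * norm (y t) \<le> C * N t" by (simp add: N_def C_def algebra_simps)
    qed
    also have "\<dots> = C * integral {a..x} N" by simp
    finally show "N x \<le> C * integral {a..x} N" .
  qed
  thus "\<And>x. x \<in> {a..b} \<Longrightarrow> y x = 0" unfolding N_def by (metis add_nonneg_eq_0_iff norm_eq_zero norm_ge_zero)
qed

lemma has_integral_shift_start:
  fixes f :: "real \<Rightarrow> 'a::banach"
  assumes "a \<le> c" "c \<le> b" "(f has_integral A) {a..b}" "(f has_integral C) {a..c}"
  shows "(f has_integral (A - C)) {c..b}"
proof -
  have fi: "f integrable_on {a..b}" using assms(3) by blast
  have ci: "f integrable_on {c..b}" by (rule integrable_subinterval_real[OF fi]) (use assms in auto)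
  have "integral {a..c} f + integral {c..b} f = integral {a..b} f"
    using Henstock_Kurzweil_Integration.integral_combine[OF assms(1,2) fi] by simp
  hence "integral {c..b} f = A - C" using integral_unique[OF assms(3)] integral_unique[OF assms(4)] by (simp add: algebra_simps)
  thus ?thesis using ci by (metis has_integral_integrable_integral)
qed

locale sol = eig +
  fixes u v :: "real \<Rightarrow> complex" and c :: complex
  assumes u0: "u 0 = 0" and L2u: "L2p u"
    and vint: "\<And>x. x \<ge> 0 \<Longrightarrow> (v has_integral u x) {0..x}"
    and hint: "\<And>x. x \<ge> 0 \<Longrightarrow> ((\<lambda>t. kf t * u t - c * pf t) has_integral (v x - v 0)) {0..x}"
begin

definition "hh t = kf t * u t - c * pf t"

lemma hint': "x \<ge> 0 \<Longrightarrow> (hh has_integral (v x - v 0)) {0..x}"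
  using hint unfolding hh_def[abs_def] .

lemma cont_u: "continuous_on {0..X} u"
proof (cases "X \<ge> 0")
  case True
  have vi: "v integrable_on {0..X}" using vint[OF True] by blast
  show ?thesis
    by (rule continuous_on_eq[OF indefinite_integral_continuous_1[OF vi]])
       (use vint in \<open>auto intro: integral_unique[symmetric]\<close>)
qed auto

lemma cont_v: "continuous_on {0..X} v"
proof (cases "X \<ge> 0")
  case True
  have hi: "hh integrable_on {0..X}" using hint'[OF True] by blast
  have "continuous_on {0..X} (\<lambda>x. v 0 + integral {0..x} hh)"
    by (intro continuous_intros indefinite_integral_continuous_1[OF hi])
  moreover have "v 0 + integral {0..x} hh = v x" if "x \<in> {0..X}" for x
    using integral_unique[OF hint'[of x]] that by simp
  ultimately show ?thesis by (rule continuous_on_eq)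
qed auto

lemma vint_from: assumes "r \<ge> 0" "r \<le> x" shows "(v has_integral (u x - u r)) {r..x}"
  using has_integral_shift_start[of 0 r x v "u x" "u r"] vint[of x] vint[of r] assms by simp

lemma hint_from: assumes "r \<ge> 0" "r \<le> x" shows "(hh has_integral (v x - v r)) {r..x}"
  using has_integral_shift_start[of 0 r x hh "v x - v 0" "v r - v 0"] hint'[of x] hint'[of r] assms by simp

end

context sol begin

definition "bi = c / (2 * w)"
definition "di = (v 0 - bi) / w"
definition "psi x = di * sin (w * complex_of_real x) + bi * complex_of_real x * cos (w * complex_of_real x)"
definition "psi' x = di * w * cos (w * complex_of_real x) + bi * (cos (w * complex_of_real x) - w * complex_of_real x * sin (w * complex_of_real x))"

lemma deriv_psi: "(psi has_vector_derivative psi' x) (at x)"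
proof -
  have "((\<lambda>u. di * sin (w * u) + bi * u * cos (w * u)) has_field_derivative psi' x) (at (complex_of_real x))"
    by (auto intro!: derivative_eq_intros simp: psi'_def algebra_simps)
  from has_vector_derivative_real_field[OF this] show ?thesis by (simp add: psi_def[abs_def])
qed

lemma deriv_psi': "(psi' has_vector_derivative (-(w^2) * psi x - c * sin (w * complex_of_real x))) (at x)"
proof -
  have e: "-(w^2) * psi x - c * sin (w * complex_of_real x) =
     di * w * (- sin (w * complex_of_real x) * w) + bi * (- sin (w * complex_of_real x) * w - (w * sin (w * complex_of_real x) + w * complex_of_real x * (cos (w * complex_of_real x) * w)))"
    using w0 by (simp add: psi_def bi_def field_simps power2_eq_square)
  have "((\<lambda>u. di * w * cos (w * u) + bi * (cos (w * u) - w * u * sin (w * u))) has_field_derivative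
      (-(w^2) * psi x - c * sin (w * complex_of_real x))) (at (complex_of_real x))"
    unfolding e by (auto intro!: derivative_eq_intros simp: algebra_simps)
  from has_vector_derivative_real_field[OF this] show ?thesis by (simp add: psi'_def[abs_def])
qed

lemma psi0: "psi 0 = 0" by (simp add: psi_def)
lemma psi'0: "psi' 0 = v 0" using w0 by (simp add: psi'_def di_def)

lemma psi_int: "x \<ge> 0 \<Longrightarrow> (psi' has_integral psi x) {0..x}"
  using fundamental_theorem_of_calculus[of 0 x psi psi'] deriv_psi psi0
  by (auto intro: has_vector_derivative_at_within)

lemma psi'_int: "x \<ge> 0 \<Longrightarrow> ((\<lambda>t. -(w^2) * psi t - c * sin (w * complex_of_real t)) has_integral (psi' x - v 0)) {0..x}"
  using fundamental_theorem_of_calculus[of 0 x psi' "\<lambda>t. -(w^2) * psi t - c * sin (w * complex_of_real t)"] deriv_psi' psi'0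
  by (auto intro: has_vector_derivative_at_within)

lemma cont_psi: "continuous_on UNIV psi" unfolding psi_def by (intro continuous_intros)
lemma cont_psi': "continuous_on UNIV psi'" unfolding psi'_def by (intro continuous_intros)

lemma inner: assumes "x \<in> {0..R}" shows "u x = psi x \<and> v x = psi' x"
proof -
  define y where "y t = u t - psi t" for t
  define y' where "y' t = v t - psi' t" for t
  have iy: "(y' has_integral y x) {0..x}" if "x \<in> {0..R}" for x
    unfolding y_def[abs_def] y'_def[abs_def] using that by (intro has_integral_diff vint psi_int) auto
  have iy': "((\<lambda>t. -(w^2) * y t) has_integral y' x) {0..x}" if x: "x \<in> {0..R}" for x
  proof -
    have "((\<lambda>t. hh t - (-(w^2) * psi t - c * sin (w * complex_of_real t))) has_integral ((v x - v 0) - (psi' x - v 0))) {0..x}"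
      using x by (intro has_integral_diff hint' psi'_int) auto
    moreover have "hh t - (-(w^2) * psi t - c * sin (w * complex_of_real t)) = -(w^2) * y t" if "t \<in> {0..x}" for t
    proof -
      have t: "0 \<le> t" "t \<le> R" using that x by auto
      have k: "kf t = -(w^2)" using t by (simp add: kf_def mu_def indicator_def)
      have p: "pf t = sin (w * complex_of_real t)" using t by (simp add: pf_def)
      show ?thesis unfolding hh_def k p y_def by (simp add: algebra_simps)
    qed
    ultimately have "((\<lambda>t. -(w^2) * y t) has_integral ((v x - v 0) - (psi' x - v 0))) {0..x}"
      using has_integral_cong[of "{0..x}" "\<lambda>t. hh t - (-(w^2) * psi t - c * sin (w * complex_of_real t))" "\<lambda>t. -(w^2) * y t"]
      by blast
    moreover have "(v x - v 0) - (psi' x - v 0) = y' x" by (simp add: y'_def)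
    ultimately show ?thesis by simp
  qed
  have y0: "y t = 0" if "t \<in> {0..R}" for t
  proof (rule ode_uniq[of 0 R y y' "\<lambda>_. -(w^2)" "norm (w^2)"])
    show "continuous_on {0..R} y" unfolding y_def[abs_def]
      by (intro continuous_intros cont_u continuous_on_subset[OF cont_psi]) auto
    show "continuous_on {0..R} y'" unfolding y'_def[abs_def]
      by (intro continuous_intros cont_v continuous_on_subset[OF cont_psi']) auto
  qed (use Rpos iy iy' that in auto)
  have "y' x = 0"
  proof -
    have "((\<lambda>t. -(w^2) * y t) has_integral 0) {0..x}"
    proof -
      have "\<And>t. t \<in> {0..x} \<Longrightarrow> -(w^2) * y t = 0" using assms y0 by auto
      hence "((\<lambda>t. -(w^2) * y t) has_integral 0) {0..x} = ((\<lambda>_. 0::complex) has_integral 0) {0..x}"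
        by (rule has_integral_cong)
      thus ?thesis by simp
    qed
    thus ?thesis using iy'[OF assms] has_integral_unique by blast
  qed
  thus ?thesis using y0[OF assms] by (simp add: y_def y'_def)
qed

end

context sol begin

definition "bo = -(c * sR) / (2 * \<i> * z)"
definition "ee t = exp (\<i> * z * complex_of_real (t - R))"
definition "em t = exp (-(\<i> * z * complex_of_real (t - R)))"
definition "PP = (u R + (v R - bo) / (\<i> * z)) / 2"
definition "QQ = (u R - (v R - bo) / (\<i> * z)) / 2"
definition "phi t = (PP + bo * complex_of_real (t - R)) * ee t + QQ * em t"
definition "phi' t = (\<i> * z * (PP + bo * complex_of_real (t - R)) + bo) * ee t - \<i> * z * QQ * em t"

lemma z0: "z \<noteq> 0" using Imz by auto

lemma deriv_phi: "(phi has_vector_derivative phi' x) (at x)"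
proof -
  have "((\<lambda>u. (PP + bo * (u - complex_of_real R)) * exp (\<i> * z * (u - complex_of_real R)) + QQ * exp (-(\<i> * z * (u - complex_of_real R))))
      has_field_derivative phi' x) (at (complex_of_real x))"
    by (auto intro!: derivative_eq_intros simp: phi'_def ee_def em_def algebra_simps)
  from has_vector_derivative_real_field[OF this] show ?thesis by (simp add: phi_def[abs_def] ee_def em_def)
qed

lemma deriv_phi': "(phi' has_vector_derivative (-mu * phi x - c * sR * ee x)) (at x)"
proof -
  have b: "2 * \<i> * z * bo = -(c * sR)" using z0 by (simp add: bo_def)
  have e: "\<i> * z * bo * ee x + (\<i> * z * (PP + bo * complex_of_real (x - R)) + bo) * (\<i> * z * ee x)
      - \<i> * z * QQ * (- (\<i> * z) * em x) = (2 * \<i> * z * bo) * ee x - z^2 * phi x"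
    by (simp add: phi_def power2_eq_square algebra_simps)
  have "((\<lambda>u. (\<i> * z * (PP + bo * (u - complex_of_real R)) + bo) * exp (\<i> * z * (u - complex_of_real R)) - \<i> * z * QQ * exp (-(\<i> * z * (u - complex_of_real R))))
      has_field_derivative (\<i> * z * bo * ee x + (\<i> * z * (PP + bo * complex_of_real (x - R)) + bo) * (\<i> * z * ee x)
      - \<i> * z * QQ * (- (\<i> * z) * em x))) (at (complex_of_real x))"
    unfolding ee_def em_def by (rule derivative_eq_intros refl | simp)+
  hence d: "(phi' has_vector_derivative (\<i> * z * bo * ee x + (\<i> * z * (PP + bo * complex_of_real (x - R)) + bo) * (\<i> * z * ee x)
      - \<i> * z * QQ * (- (\<i> * z) * em x))) (at x)"
    using has_vector_derivative_real_field by (fastforce simp: phi'_def[abs_def] ee_def em_def)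
  have f: "(2 * \<i> * z * bo) * ee x - z^2 * phi x = -mu * phi x - c * sR * ee x"
    unfolding b zsq' by (simp add: algebra_simps)
  show ?thesis using d unfolding e f .
qed

lemma phiR: "phi R = u R" by (simp add: phi_def ee_def em_def PP_def QQ_def field_simps)
lemma phi'R: "phi' R = v R" using z0 by (simp add: phi'_def ee_def em_def PP_def QQ_def field_simps)

lemma cont_phi: "continuous_on UNIV phi" unfolding phi_def ee_def em_def by (intro continuous_intros)
lemma cont_phi': "continuous_on UNIV phi'" unfolding phi'_def ee_def em_def by (intro continuous_intros)

lemma phi_int: "R \<le> x \<Longrightarrow> (phi' has_integral (phi x - u R)) {R..x}"
  using fundamental_theorem_of_calculus[of R x phi phi'] deriv_phi phiR
  by (auto intro: has_vector_derivative_at_within)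

lemma phi'_int: "R \<le> x \<Longrightarrow> ((\<lambda>t. -mu * phi t - c * sR * ee t) has_integral (phi' x - v R)) {R..x}"
  using fundamental_theorem_of_calculus[of R x phi' "\<lambda>t. -mu * phi t - c * sR * ee t"] deriv_phi' phi'R
  by (auto intro: has_vector_derivative_at_within)

lemma outer: assumes "R \<le> x" shows "u x = phi x \<and> v x = phi' x"
proof -
  define X where "X = x"
  define y where "y t = u t - phi t" for t
  define y' where "y' t = v t - phi' t" for t
  have iy: "(y' has_integral y x) {R..x}" if "x \<in> {R..X}" for x
  proof -
    have "(y' has_integral ((u x - u R) - (phi x - u R))) {R..x}"
      unfolding y'_def[abs_def] using that Rpos by (intro has_integral_diff vint_from phi_int) auto
    thus ?thesis by (simp add: y_def)
  qed
  have iy': "((\<lambda>t. -mu * y t) has_integral y' x) {R..x}" if x: "x \<in> {R..X}" for x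
  proof -
    have A: "((\<lambda>t. hh t - (-mu * phi t - c * sR * ee t)) has_integral ((v x - v R) - (phi' x - v R))) {R..x}"
      using x Rpos by (intro has_integral_diff hint_from phi'_int) auto
    have B: "-mu * y t = hh t - (-mu * phi t - c * sR * ee t)" if "t \<in> {R..x} - {R}" for t
    proof -
      have t: "R < t" using that by auto
      have k: "kf t = -mu" using t by (simp add: kf_def indicator_def)
      have p: "pf t = sR * ee t" using t by (simp add: pf_def ee_def)
      show ?thesis unfolding hh_def k p y_def by (simp add: algebra_simps)
    qed
    have "((\<lambda>t. -mu * y t) has_integral ((v x - v R) - (phi' x - v R))) {R..x}"
      by (rule has_integral_spike_finite[where S="{R}", OF _ B A]) auto
    moreover have "(v x - v R) - (phi' x - v R) = y' x" by (simp add: y'_def)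
    ultimately show ?thesis by simp
  qed
  have y0: "y t = 0" if "t \<in> {R..X}" for t
  proof (rule ode_uniq[of R X y y' "\<lambda>_. -mu" "norm mu"])
    show "continuous_on {R..X} y" unfolding y_def[abs_def]
      by (intro continuous_intros continuous_on_subset[OF cont_u] continuous_on_subset[OF cont_phi]) (use Rpos in auto)
    show "continuous_on {R..X} y'" unfolding y'_def[abs_def]
      by (intro continuous_intros continuous_on_subset[OF cont_v] continuous_on_subset[OF cont_phi']) (use Rpos in auto)
    show "R \<le> X" using assms X_def by simp
    show "\<And>x. x \<in> {R..X} \<Longrightarrow> (y' has_integral y x) {R..x}" by (rule iy)
    show "\<And>x. x \<in> {R..X} \<Longrightarrow> ((\<lambda>t. -mu * y t) has_integral y' x) {R..x}" by (rule iy')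
    show "\<And>t. t \<in> {R..X} \<Longrightarrow> norm (-mu) \<le> norm mu" by simp
    show "t \<in> {R..X}" using that .
  qed
  have "y' x = 0"
  proof -
    have "\<And>t. t \<in> {R..x} \<Longrightarrow> -mu * y t = 0" using assms y0 X_def by auto
    hence "((\<lambda>t. -mu * y t) has_integral 0) {R..x} = ((\<lambda>_. 0::complex) has_integral 0) {R..x}"
      by (rule has_integral_cong)
    hence "((\<lambda>t. -mu * y t) has_integral 0) {R..x}" by simp
    moreover have "((\<lambda>t. -mu * y t) has_integral y' x) {R..x}" using iy'[of x] assms X_def by simp
    ultimately show ?thesis using has_integral_unique by blast
  qed
  thus ?thesis using y0[of x] assms X_def by (simp add: y_def y'_def)
qed

end

lemma ev_big: assumes "q > 0" "s > (0::real)" shows "eventually (\<lambda>x. q * exp (s * (x - r)) - (p + b * (x - r)) \<ge> 1) at_top"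
  using assms by real_asymp
lemma alg_cert:
  fixes di bi bo C s w z R c ii :: complex
  assumes "ii * z * (di * s + bi * R * C) + bo = di * w * C + bi * (C - w * R * s)" "w * C = ii * z * s" "2 * w * bi = c" "2 * ii * z * bo = -(c * s)" "ii^2 = -1"
  shows "ii * (c * s * (w^2 - z^2) * (R * z + ii)) = 0"
  using assms by algebra

lemma not_L2_ge1:
  fixes f :: "real \<Rightarrow> real"
  assumes fi: "set_integrable lborel {0..} f" and X: "X \<ge> 0" and ge: "\<And>x. x \<ge> X \<Longrightarrow> f x \<ge> 1"
  shows False
proof -
  have i1: "integrable lborel (\<lambda>x. indicator {0..} x *\<^sub>R f x)" using fi by (simp add: set_integrable_def)
  have "integrable lborel (indicator {X..} :: real \<Rightarrow> real)"
  proof (rule Bochner_Integration.integrable_bound[OF i1])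
    show "(indicator {X..} :: real \<Rightarrow> real) \<in> borel_measurable lborel" by measurable
    show "AE x in lborel. norm (indicator {X..} x :: real) \<le> norm (indicator {0..} x *\<^sub>R f x)"
    proof (intro AE_I2)
      fix x :: real
      show "norm (indicator {X..} x :: real) \<le> norm (indicator {0..} x *\<^sub>R f x)"
      proof (cases "x \<ge> X")
        case True thus ?thesis using ge[OF True] X by (simp add: indicator_def)
      qed (simp add: indicator_def)
    qed
  qed
  hence fin: "emeasure lborel {X..} < \<infinity>" by (simp add: integrable_indicator_iff)
  define r where "r = enn2real (emeasure lborel {X..})"
  have er: "emeasure lborel {X..} = ennreal r" using fin unfolding r_def
    by (simp add: ennreal_enn2real_if less_top[symmetric])
  have r0: "r \<ge> 0" by (simp add: r_def)
  have "emeasure lborel {X..X + (r + 1)} \<le> emeasure lborel {X..}"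
    by (rule emeasure_mono) auto
  hence "ennreal (r + 1) \<le> ennreal r" using er r0 by simp
  hence "r + 1 \<le> r" using r0 by (simp add: ennreal_le_iff)
  thus False by simp
qed

context sol begin

lemma QQ0: "QQ = 0"
proof (rule ccontr)
  assume Q: "QQ \<noteq> 0"
  define s where "s = Im z"
  have s0: "s > 0" using Imz by (simp add: s_def)
  have "eventually (\<lambda>x. cmod QQ * exp (s * (x - R)) - (cmod PP + cmod bo * (x - R)) \<ge> 1) at_top"
    by (rule ev_big) (use Q s0 in auto)
  then obtain X0 where X0: "\<And>x. x \<ge> X0 \<Longrightarrow> cmod QQ * exp (s * (x - R)) - (cmod PP + cmod bo * (x - R)) \<ge> 1"
    by (auto simp: eventually_at_top_linorder)
  define X where "X = max X0 R"
  have X: "X \<ge> 0" using Rpos by (simp add: X_def)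
  have "(cmod (u x))^2 \<ge> 1" if x: "x \<ge> X" for x
  proof -
    have xR: "x \<ge> R" and xX0: "x \<ge> X0" using x by (auto simp: X_def)
    have ux: "u x = phi x" using outer[OF xR] by simp
    have nee: "cmod (ee x) \<le> 1" using xR s0 by (simp add: ee_def norm_exp_eq_Re s_def mult_nonneg_nonneg)
    have nem: "cmod (em x) = exp (s * (x - R))" by (simp add: em_def norm_exp_eq_Re s_def)
    have "cmod ((PP + bo * complex_of_real (x - R)) * ee x) \<le> cmod PP + cmod bo * (x - R)"
    proof -
      have "cmod ((PP + bo * complex_of_real (x - R)) * ee x) = cmod (PP + bo * complex_of_real (x - R)) * cmod (ee x)"
        by (simp add: norm_mult)
      also have "\<dots> \<le> cmod (PP + bo * complex_of_real (x - R)) * 1" using nee by (intro mult_left_mono) auto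
      also have "\<dots> \<le> cmod PP + cmod bo * (x - R)"
      proof -
        have nx: "cmod (complex_of_real (x - R)) = x - R" using xR by (metis norm_of_real abs_of_nonneg diff_ge_0_iff_ge)
        have "cmod (PP + bo * complex_of_real (x - R)) \<le> cmod PP + cmod (bo * complex_of_real (x - R))"
          by (rule norm_triangle_ineq)
        also have "\<dots> = cmod PP + cmod bo * (x - R)" by (simp only: norm_mult nx)
        finally show ?thesis by simp
      qed
      finally show ?thesis .
    qed
    moreover have "cmod (QQ * em x) = cmod QQ * exp (s * (x - R))" by (simp add: norm_mult nem)
    moreover have "cmod (QQ * em x) - cmod ((PP + bo * complex_of_real (x - R)) * ee x) \<le> cmod (phi x)"
    proof -
      have "cmod (QQ * em x) - cmod ((PP + bo * complex_of_real (x - R)) * ee x) \<le> cmod (QQ * em x + (PP + bo * complex_of_real (x - R)) * ee x)"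
        by (rule norm_diff_ineq)
      thus ?thesis unfolding phi_def by (simp only: add.commute)
    qed
    ultimately have "cmod (phi x) \<ge> 1" using X0[OF xX0] by linarith
    thus ?thesis using ux by (simp add: one_le_power)
  qed
  moreover have "set_integrable lborel {0..} (\<lambda>x. (cmod (u x))^2)" using L2u by (simp add: L2p_def)
  ultimately show False using not_L2_ge1[OF _ X] by blast
qed

lemma sR0: "sR \<noteq> 0"
proof
  assume s: "sR = 0"
  hence "w * cos (w * complex_of_real R) = 0" using match by (simp add: sR_def)
  hence "cos (w * complex_of_real R) = 0" using w0 by simp
  moreover have "sin (w * complex_of_real R)^2 + cos (w * complex_of_real R)^2 = 1" by (rule sin_cos_squared_add)
  ultimately show False using s by (simp add: sR_def)
qed

lemma c0: "c = 0"
proof -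
  have iR: "u R = psi R" "v R = psi' R" using inner[of R] Rpos by auto
  have eqA: "\<i> * z * psi R + bo = psi' R"
  proof -
    have "u R - (v R - bo) / (\<i> * z) = 0" using QQ0 unfolding QQ_def by (simp only: divide_eq_0_iff) simp
    hence "u R = (v R - bo) / (\<i> * z)" by simp
    thus ?thesis using z0 iR by (simp add: field_simps)
  qed
  have A: "\<i>*z*(di * sR + bi*complex_of_real R*cos (w * complex_of_real R)) + bo
      = di*w*cos (w * complex_of_real R) + bi*(cos (w * complex_of_real R) - w * complex_of_real R * sR)"
    using eqA by (simp add: psi_def psi'_def sR_def mult.assoc)
  have B: "w * cos (w * complex_of_real R) = \<i>*z * sR" using match by (simp add: sR_def)
  have C: "2*w*bi = c" using w0 by (simp add: bi_def)
  have D: "2*\<i>*z*bo = -(c * sR)" using z0 by (simp add: bo_def)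
  have "\<i> * (c * sR *(w^2 - z^2)*(complex_of_real R*z + \<i>)) = 0"
    by (rule alg_cert[OF A B C D]) simp
  moreover have "w^2 - z^2 \<noteq> 0" using zsq gpos by simp
  moreover have "complex_of_real R*z + \<i> \<noteq> 0"
  proof
    assume "complex_of_real R*z + \<i> = 0"
    hence "Im (complex_of_real R*z + \<i>) = 0" by simp
    moreover have "Im (complex_of_real R*z + \<i>) > 0" using mult_pos_pos[OF Rpos Imz] by simp
    ultimately show False by simp
  qed
  ultimately show ?thesis using sR0 by simp
qed

lemma u_span: "\<exists>d. \<forall>x\<ge>0. u x = d * pf x"
proof (intro exI allI impI)
  fix x :: real assume x: "x \<ge> 0"
  have bi0: "bi = 0" unfolding bi_def using c0 by simp
  have bo0: "bo = 0" unfolding bo_def using c0 by simp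
  show "u x = di * pf x"
  proof (cases "x \<le> R")
    case True
    thus ?thesis using inner[of x] x bi0 by (simp add: psi_def pf_def)
  next
    case False
    have uR: "u R = di * sR" using inner[of R] Rpos bi0 by (simp add: psi_def sR_def)
    have "u R - (v R - bo) / (\<i> * z) = 0" using QQ0 unfolding QQ_def by (simp only: divide_eq_0_iff) simp
    hence e: "(v R - bo) / (\<i> * z) = u R" by simp
    have PPe: "PP = u R" unfolding PP_def e by simp
    have "u x = phi x" using outer[of x] False by simp
    also have "\<dots> = di * sR * ee x" using QQ0 bo0 PPe uR by (simp add: phi_def)
    also have "\<dots> = di * pf x" using False by (simp add: pf_def ee_def)
    finally show ?thesis .
  qed
qed

end

lemma L_rel_cong:
  assumes L: "L_rel \<gamma> R u f" and fg: "\<And>x. x \<ge> 0 \<Longrightarrow> f x = g x"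
  shows "L_rel \<gamma> R u g"
proof -
  have e1: "(\<lambda>x. indicator S x *\<^sub>R f x) = (\<lambda>x. indicator S x *\<^sub>R g x)" if "S \<subseteq> {0..}" for S :: "real set"
    using that fg by (auto simp: fun_eq_iff indicator_def)
  have e2: "(\<lambda>x. indicator S x *\<^sub>R (cmod (f x))^2) = (\<lambda>x. indicator S x *\<^sub>R (cmod (g x))^2)" if "S \<subseteq> {0..}" for S :: "real set"
    using that fg by (auto simp: fun_eq_iff indicator_def)
  have e3: "(\<lambda>t. indicator S t *\<^sub>R (\<i> * complex_of_real (\<gamma> * indicator {0..R} t) * u t - f t)) =
            (\<lambda>t. indicator S t *\<^sub>R (\<i> * complex_of_real (\<gamma> * indicator {0..R} t) * u t - g t))" if "S \<subseteq> {0..}" for S :: "real set"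
    using that fg by (auto simp: fun_eq_iff indicator_def)
  have L2: "L2p g" using L e1[of "{0..}"] e2[of "{0..}"]
    by (simp add: L_rel_def L2p_def set_borel_measurable_def set_integrable_def)
  from L obtain v where v: "\<forall>x\<ge>0. set_integrable lborel {0..x} v \<and>
        set_integrable lborel {0..x} (\<lambda>t. \<i> * complex_of_real (\<gamma> * indicator {0..R} t) * u t - f t) \<and>
        u x = (LINT t:{0..x}|lborel. v t) \<and>
        v x = v 0 + (LINT t:{0..x}|lborel. \<i> * complex_of_real (\<gamma> * indicator {0..R} t) * u t - f t)"
    unfolding L_rel_def by blast
  have A: "\<forall>x\<ge>0. set_integrable lborel {0..x} v \<and>
        set_integrable lborel {0..x} (\<lambda>t. \<i> * complex_of_real (\<gamma> * indicator {0..R} t) * u t - g t) \<and>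
        u x = (LINT t:{0..x}|lborel. v t) \<and>
        v x = v 0 + (LINT t:{0..x}|lborel. \<i> * complex_of_real (\<gamma> * indicator {0..R} t) * u t - g t)"
  proof (intro allI impI)
    fix x :: real assume x: "x \<ge> 0"
    have s: "{0..x} \<subseteq> {0::real..}" by auto
    show "set_integrable lborel {0..x} v \<and>
        set_integrable lborel {0..x} (\<lambda>t. \<i> * complex_of_real (\<gamma> * indicator {0..R} t) * u t - g t) \<and>
        u x = (LINT t:{0..x}|lborel. v t) \<and>
        v x = v 0 + (LINT t:{0..x}|lborel. \<i> * complex_of_real (\<gamma> * indicator {0..R} t) * u t - g t)"
    proof (intro conjI)
      have vx: "set_integrable lborel {0..x} v \<and>
        set_integrable lborel {0..x} (\<lambda>t. \<i> * complex_of_real (\<gamma> * indicator {0..R} t) * u t - f t) \<and>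
        u x = (LINT t:{0..x}|lborel. v t) \<and>
        v x = v 0 + (LINT t:{0..x}|lborel. \<i> * complex_of_real (\<gamma> * indicator {0..R} t) * u t - f t)"
        using v x by blast
      show "set_integrable lborel {0..x} v" "u x = (LINT t:{0..x}|lborel. v t)" using vx by blast+
      have i2: "set_integrable lborel {0..x} (\<lambda>t. \<i> * complex_of_real (\<gamma> * indicator {0..R} t) * u t - f t)" using vx by blast
      thus "set_integrable lborel {0..x} (\<lambda>t. \<i> * complex_of_real (\<gamma> * indicator {0..R} t) * u t - g t)"
        unfolding set_integrable_def e3[OF s] .
      have e2: "v x = v 0 + (LINT t:{0..x}|lborel. \<i> * complex_of_real (\<gamma> * indicator {0..R} t) * u t - f t)" using vx by blast
      thus "v x = v 0 + (LINT t:{0..x}|lborel. \<i> * complex_of_real (\<gamma> * indicator {0..R} t) * u t - g t)"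
        unfolding set_lebesgue_integral_def e3[OF s] .
    qed
  qed
  have Lu: "L2p u" "u 0 = 0" using L unfolding L_rel_def by blast+
  show ?thesis unfolding L_rel_def
  proof (intro conjI)
    show "L2p u" "u 0 = 0" by (rule Lu(1), rule Lu(2))
    show "L2p g" by (rule L2)
    show "\<exists>v. \<forall>x\<ge>0. set_integrable lborel {0..x} v \<and>
        set_integrable lborel {0..x} (\<lambda>t. \<i> * complex_of_real (\<gamma> * indicator {0..R} t) * u t - g t) \<and>
        u x = (LINT t:{0..x}|lborel. v t) \<and>
        v x = v 0 + (LINT t:{0..x}|lborel. \<i> * complex_of_real (\<gamma> * indicator {0..R} t) * u t - g t)"
      by (rule exI[of _ v]) (rule A)
  qed
qed

context eig begin

lemma L_rel_span:
  assumes L: "L_rel \<gamma> R u (\<lambda>x. mu * u x + c * pf x)"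
  shows "\<exists>d. \<forall>x\<ge>0. u x = d * pf x"
proof -
  from L obtain v where L2u: "L2p u" and u0: "u 0 = 0" and v: "\<forall>x\<ge>0. set_integrable lborel {0..x} v \<and>
        set_integrable lborel {0..x} (\<lambda>t. \<i> * complex_of_real (\<gamma> * indicator {0..R} t) * u t - (mu * u t + c * pf t)) \<and>
        u x = (LINT t:{0..x}|lborel. v t) \<and>
        v x = v 0 + (LINT t:{0..x}|lborel. \<i> * complex_of_real (\<gamma> * indicator {0..R} t) * u t - (mu * u t + c * pf t))"
    unfolding L_rel_def by blast
  have he: "(\<lambda>t. \<i> * complex_of_real (\<gamma> * indicator {0..R} t) * u t - (mu * u t + c * pf t)) = (\<lambda>t. kf t * u t - c * pf t)"
    by (simp add: fun_eq_iff kf_def algebra_simps)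
  have "sol \<gamma> R w z u v c"
  proof (unfold_locales)
    show "u 0 = 0" by (rule u0)
    show "L2p u" by (rule L2u)
    fix x :: real assume x: "x \<ge> 0"
    have vx: "set_integrable lborel {0..x} v \<and>
        set_integrable lborel {0..x} (\<lambda>t. \<i> * complex_of_real (\<gamma> * indicator {0..R} t) * u t - (mu * u t + c * pf t)) \<and>
        u x = (LINT t:{0..x}|lborel. v t) \<and>
        v x = v 0 + (LINT t:{0..x}|lborel. \<i> * complex_of_real (\<gamma> * indicator {0..R} t) * u t - (mu * u t + c * pf t))"
      using v x by blast
    have i1: "set_integrable lborel {0..x} v" and e1: "u x = (LINT t:{0..x}|lborel. v t)" using vx by blast+
    show "(v has_integral u x) {0..x}"
      using set_borel_integral_eq_integral[OF i1] e1 by (simp add: has_integral_integral)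
    have i2: "set_integrable lborel {0..x} (\<lambda>t. kf t * u t - c * pf t)"
      and e2: "v x = v 0 + (LINT t:{0..x}|lborel. kf t * u t - c * pf t)" using vx unfolding he by blast+
    show "((\<lambda>t. kf t * u t - c * pf t) has_integral (v x - v 0)) {0..x}"
      using set_borel_integral_eq_integral[OF i2] e2 by (simp add: has_integral_integral)
  qed
  thus ?thesis by (rule sol.u_span)
qed

lemma chain_span:
  "(\<forall>i<k. L_rel \<gamma> R (us i) (\<lambda>x. mu * us i x + us (Suc i) x)) \<Longrightarrow> (\<forall>x\<ge>0. us k x = 0) \<Longrightarrow>
   \<exists>d. \<forall>x\<ge>0. us 0 x = d * pf x"
proof (induction k arbitrary: us)
  case 0
  thus ?case by (intro exI[of _ 0]) auto
next
  case (Suc k)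
  have "\<exists>d. \<forall>x\<ge>0. us (Suc 0) x = d * pf x"
    using Suc.IH[of "\<lambda>i. us (Suc i)"] Suc.prems by auto
  then obtain d1 where d1: "\<And>x. x \<ge> 0 \<Longrightarrow> us (Suc 0) x = d1 * pf x" by blast
  have "L_rel \<gamma> R (us 0) (\<lambda>x. mu * us 0 x + us (Suc 0) x)" using Suc.prems by auto
  hence "L_rel \<gamma> R (us 0) (\<lambda>x. mu * us 0 x + d1 * pf x)"
    by (rule L_rel_cong) (simp add: d1)
  thus ?case by (rule L_rel_span)
qed

lemma sR0': "sR \<noteq> 0"
proof
  assume s: "sR = 0"
  hence "w * cos (w * complex_of_real R) = 0" using match by (simp add: sR_def)
  hence "cos (w * complex_of_real R) = 0" using w0 by simp
  moreover have "sin (w * complex_of_real R)^2 + cos (w * complex_of_real R)^2 = 1" by (rule sin_cos_squared_add)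
  ultimately show False using s by (simp add: sR_def)
qed

lemma in_sigma_d: assumes Imm: "Im mu > 0" shows "mu \<in> sigma_d \<gamma> R"
  unfolding sigma_d_def
proof (intro CollectI conjI)
  show "mu \<notin> complex_of_real ` {0..}" using Imm by auto
  show "is_eigenvalue \<gamma> R mu" unfolding is_eigenvalue_def
  proof (rule exI[of _ pf], intro conjI)
    show "L_rel \<gamma> R pf (\<lambda>x. mu * pf x)" by (rule L_rel_pf)
    show "\<exists>x\<ge>0. pf x \<noteq> 0" using Rpos sR0' by (intro exI[of _ R]) (simp add: pf_def sR_def)
  qed
  show "finite_alg_mult \<gamma> R mu" unfolding finite_alg_mult_def
  proof (intro exI[of _ "{pf}"] conjI ballI)
    fix u assume "u \<in> gen_eigenspace \<gamma> R mu"
    then obtain k us where "us 0 = u" "\<forall>i<k. L_rel \<gamma> R (us i) (\<lambda>x. mu * us i x + us (Suc i) x)" "\<forall>x\<ge>0. us k x = 0"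
      unfolding gen_eigenspace_def by blast
    then obtain d where d: "\<forall>x\<ge>0. u x = d * pf x" using chain_span by blast
    show "\<exists>c. \<forall>x\<ge>0. u x = (\<Sum>b\<in>{pf}. c b * b x)" using d by (intro exI[of _ "\<lambda>_. d"]) simp
  qed simp
qed

end

theorem lemma2p4:
  fixes \<gamma> R :: real and j :: nat and w :: complex
  assumes "\<gamma> > 0"
    and "R \<ge> 600 * (\<gamma> powr (3/4) + \<gamma> powr (-3/4))"
    and "1 \<le> j"
    and "int j \<le> \<lfloor>(1 / (32 * pi)) * (\<gamma> * R^2 / ln R)\<rfloor>"
    and "w \<in> F_j \<gamma> j"
    and "w = G_fun \<gamma> j R w"
  shows "- \<gamma> / 2 \<le> Im (w^2) \<and> Im (w^2) \<le> 0 \<and>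
         Im (w^2 + \<i> * complex_of_real \<gamma>) > 0 \<and>
         w^2 + \<i> * complex_of_real \<gamma> \<in> sigma_d \<gamma> R"
proof -
  note P = part1[OF assms]
  define z where "z = sq_m (w^2 + \<i> * complex_of_real \<gamma>)"
  have Imm: "Im (w^2 + \<i> * complex_of_real \<gamma>) > 0" using P assms(1) by simp
  interpret eig \<gamma> R w z
  proof
    show "\<gamma> > 0" by (rule assms(1))
    show "R > 0" "w \<noteq> 0" using P by auto
    show "z^2 = w^2 + \<i> * complex_of_real \<gamma>" by (simp add: z_def sq_m_sq)
    show "Im z > 0" unfolding z_def by (rule Im_sq_m_pos[OF Imm])
    show "w * cos (w * complex_of_real R) = \<i> * z * sin (w * complex_of_real R)" using P by (simp add: z_def)
  qed
  have "w^2 + \<i> * complex_of_real \<gamma> \<in> sigma_d \<gamma> R"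
    using in_sigma_d Imm by (simp add: mu_def)
  thus ?thesis using P Imm by simp
qed

end
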